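(* Let $q$ be an odd prime power and $n\ge 1$. If $A\subset\mathbb{F}_q^n$ satisfies \[ |A|>2\binom{n+q-1}{q-1}+2\binom{n+\frac{q-1}{2}}{\frac{q-1}{2}}+2, \] then $A$ contains a right angle.
   Context: $\mathbb{F}_q^n$ carries the standard bilinear form $\langle u,v\rangle=\sum_{i=1}^n u_iv_i$. A right angle in $\mathbb{F}_q^n$ is a triple $x,y,z\in\mathbb{F}_q^n$ of pairwise distinct elements satisfying $\langle x-y,x-z\rangle=0$. *)

theory Defs
  imports "HOL-Analysis.Analysis"
begin

definition bform :: "'a::comm_ring ^ 'n \<Rightarrow> 'a ^ 'n \<Rightarrow> 'a" where
  "bform u v = (\<Sum>i\<in>UNIV. u $ i * v $ i)"

definition right_angle :: "'a::comm_ring ^ 'n \<Rightarrow> 'a ^ 'n \<Rightarrow> 'a ^ 'n \<Rightarrow> bool" where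
  "right_angle x y z \<longleftrightarrow> x \<noteq> y \<and> x \<noteq> z \<and> y \<noteq> z \<and> bform (x - y) (x - z) = 0"

end

theory Submission
  imports Defs "HOL-Library.Function_Algebras" "HOL-Library.Multiset" "HOL-Library.Cardinality"
begin

lemma fermat_field:
  fixes a :: "'a::{finite,field}"
  assumes "a \<noteq> 0"
  shows "a ^ (CARD('a) - 1) = 1"
proof -
  let ?S = "UNIV - {0::'a}"
  have bij: "bij_betw (\<lambda>y. a * y) ?S ?S"
    unfolding bij_betw_def
  proof
    show "inj_on (\<lambda>y. a * y) ?S" using assms by (auto simp: inj_on_def)
    show "(\<lambda>y. a * y) ` ?S = ?S"
    proof
      show "(\<lambda>y. a * y) ` ?S \<subseteq> ?S" using assms by auto
      show "?S \<subseteq> (\<lambda>y. a * y) ` ?S"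
      proof
        fix y assume "y \<in> ?S"
        then have "y = a * (y / a)" "y / a \<in> ?S" using assms by auto
        then show "y \<in> (\<lambda>y. a * y) ` ?S" by blast
      qed
    qed
  qed
  have "(\<Prod>y\<in>?S. a * y) = (\<Prod>y\<in>?S. y)"
    using prod.reindex_bij_betw[OF bij, of "\<lambda>y. y"] by simp
  moreover have "(\<Prod>y\<in>?S. a * y) = a ^ card ?S * (\<Prod>y\<in>?S. y)"
    by (simp add: prod.distrib)
  moreover have "(\<Prod>y\<in>?S. y) \<noteq> 0" by simp
  moreover have "card ?S = CARD('a) - 1"
    by (simp add: card_Diff_singleton)
  ultimately show ?thesis by (metis mult_cancel_right1)
qed

definition sc :: "'a::field \<Rightarrow> ('b \<Rightarrow> 'a) \<Rightarrow> ('b \<Rightarrow> 'a)" where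
  "sc c f = (\<lambda>y. c * f y)"

lemma vs_sc: "vector_space (sc :: 'a::field \<Rightarrow> ('b \<Rightarrow> 'a) \<Rightarrow> ('b \<Rightarrow> 'a))"
  unfolding vector_space_def sc_def by (auto simp: fun_eq_iff algebra_simps)

global_interpretation V: vector_space "sc :: 'a::field \<Rightarrow> ('b \<Rightarrow> 'a) \<Rightarrow> ('b \<Rightarrow> 'a)"
  by (rule vs_sc)

lemma sum_fun_app: "(\<Sum>i\<in>I. f i) y = (\<Sum>i\<in>I. f i y)"
  by (induction I rule: infinite_finite_induct) auto

definition cf :: "'a::field^'n \<Rightarrow> 'n option \<Rightarrow> 'a^'n \<Rightarrow> 'a" where
  "cf w p y = (case p of None \<Rightarrow> 1 | Some j \<Rightarrow> (y - w) $ j)"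

definition mon :: "('a::field^'n) set \<Rightarrow> 'a^'n \<Rightarrow> 'n option multiset \<Rightarrow> 'a^'n \<Rightarrow> 'a" where
  "mon S w M = (\<lambda>y. if y \<in> S then prod_mset (image_mset (\<lambda>p. cf w p y) M) else 0)"

lemma mult_span:
  assumes "f \<in> V.span (mon S w ` multisets_of_size UNIV k)"
  shows "(\<lambda>y. cf w p y * f y) \<in> V.span (mon S w ` multisets_of_size UNIV (Suc k))"
  using assms
proof (induction rule: V.span_induct_alt)
  case base
  then show ?case using V.span_zero by (simp add: zero_fun_def)
next
  case (step c x y)
  then obtain M where M: "M \<in> multisets_of_size UNIV k" "x = mon S w M" by auto
  have "(\<lambda>ya. cf w p ya * x ya) = mon S w (add_mset p M)"
    using M(2) by (auto simp: mon_def fun_eq_iff)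
  moreover have "add_mset p M \<in> multisets_of_size UNIV (Suc k)"
    using M(1) by (simp add: multisets_of_size_def)
  ultimately have "(\<lambda>ya. cf w p ya * x ya) \<in> V.span (mon S w ` multisets_of_size UNIV (Suc k))"
    by (auto intro: V.span_base)
  then have "sc c (\<lambda>ya. cf w p ya * x ya) + (\<lambda>ya. cf w p ya * y ya) \<in> V.span (mon S w ` multisets_of_size UNIV (Suc k))"
    using step by (intro V.span_add V.span_scale)
  moreover have "sc c (\<lambda>ya. cf w p ya * x ya) + (\<lambda>ya. cf w p ya * y ya) = (\<lambda>ya. cf w p ya * (sc c x + y) ya)"
    by (auto simp: sc_def fun_eq_iff algebra_simps)
  ultimately show ?case by simp
qed

lemma G_span:
  fixes u :: "'a::field^'n"
  shows "(\<lambda>y. if y \<in> S then (a - (\<Sum>i\<in>UNIV. u$i * (y - w)$i)) ^ k else 0)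
     \<in> V.span (mon S w ` multisets_of_size UNIV k)"
proof (induction k)
  case 0
  have "(\<lambda>y. if y \<in> S then (a - (\<Sum>i\<in>UNIV. u$i * (y - w)$i)) ^ 0 else 0) = mon S w {#}"
    by (auto simp: mon_def fun_eq_iff)
  then show ?case by (auto intro: V.span_base)
next
  case (Suc k)
  let ?G = "\<lambda>y. if y \<in> S then (a - (\<Sum>i\<in>UNIV. u$i * (y - w)$i)) ^ k else 0"
  let ?B = "V.span (mon S w ` multisets_of_size UNIV (Suc k))"
  have "sc a (\<lambda>y. cf w None y * ?G y) \<in> ?B"
    by (intro V.span_scale mult_span Suc)
  moreover have "(\<Sum>i\<in>UNIV. sc (u$i) (\<lambda>y. cf w (Some i) y * ?G y)) \<in> ?B"
    by (intro V.span_sum V.span_scale mult_span Suc)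
  ultimately have "sc a (\<lambda>y. cf w None y * ?G y) - (\<Sum>i\<in>UNIV. sc (u$i) (\<lambda>y. cf w (Some i) y * ?G y)) \<in> ?B"
    by (rule V.span_diff)
  moreover have "sc a (\<lambda>y. cf w None y * ?G y) - (\<Sum>i\<in>UNIV. sc (u$i) (\<lambda>y. cf w (Some i) y * ?G y))
      = (\<lambda>y. if y \<in> S then (a - (\<Sum>i\<in>UNIV. u$i * (y - w)$i)) ^ Suc k else 0)"
    by (auto simp: fun_eq_iff sum_fun_app sc_def cf_def algebra_simps sum_distrib_left sum_distrib_right)
  ultimately show ?case by simp
qed

theorem theorem1:
  fixes A :: "(('a::{finite,field}) ^ 'n) set"
  assumes "odd CARD('a)"
    and "card A > 2 * ((CARD('n) + CARD('a) - 1) choose (CARD('a) - 1))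
                 + 2 * ((CARD('n) + (CARD('a) - 1) div 2) choose ((CARD('a) - 1) div 2)) + 2"
  shows "\<exists>x\<in>A. \<exists>y\<in>A. \<exists>z\<in>A. right_angle x y z"
proof (rule ccontr)
  assume nra: "\<not> (\<exists>x\<in>A. \<exists>y\<in>A. \<exists>z\<in>A. right_angle x y z)"
  define q where "q = CARD('a)"
  define n where "n = CARD('n)"
  have "card {0::'a, 1} \<le> CARD('a)" by (rule card_mono) auto
  then have q2: "q \<ge> 2" unfolding q_def by simp
  have "A \<noteq> {}" using assms(2) by auto
  then obtain w where w: "w \<in> A" by auto
  define A' where "A' = A - {w}"
  define e where "e x = (\<lambda>y::'a^'n. if y = x then (1::'a) else 0)" for x
  define B where "B = mon A' w ` multisets_of_size UNIV (q - 1)"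
  have finB: "finite B" unfolding B_def by (simp add: finite_multisets_of_size)
  have spanB: "e x \<in> V.span B" if x: "x \<in> A'" for x
  proof -
    define u where "u = x - w"
    define a where "a = (\<Sum>i\<in>UNIV. u$i * u$i)"
    have G: "(\<lambda>y. if y \<in> A' then (a - (\<Sum>i\<in>UNIV. u$i * (y - w)$i)) ^ (q - 1) else 0) \<in> V.span B"
      unfolding B_def by (rule G_span)
    have I: "mon A' w (replicate_mset (q - 1) None) \<in> V.span B"
      unfolding B_def by (intro V.span_base imageI) (simp add: multisets_of_size_def)
    have "e x = mon A' w (replicate_mset (q - 1) None)
        - (\<lambda>y. if y \<in> A' then (a - (\<Sum>i\<in>UNIV. u$i * (y - w)$i)) ^ (q - 1) else 0)"
    proof (rule ext)
      fix y
      show "e x y = (mon A' w (replicate_mset (q - 1) None)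
        - (\<lambda>y. if y \<in> A' then (a - (\<Sum>i\<in>UNIV. u$i * (y - w)$i)) ^ (q - 1) else 0)) y"
      proof (cases "y \<in> A'")
        case False
        then have "y \<noteq> x" using x by auto
        then show ?thesis using False by (simp add: e_def mon_def)
      next
        case True
        have eq: "a - (\<Sum>i\<in>UNIV. u$i * (y - w)$i) = bform (x - y) (x - w)"
          unfolding a_def u_def bform_def
          by (simp add: sum_subtractf[symmetric] algebra_simps)
        have m1: "mon A' w (replicate_mset (q - 1) None) y = 1"
          using True by (simp add: mon_def cf_def)
        show ?thesis
        proof (cases "y = x")
          case True2: True
          have "bform (x - y) (x - w) = 0" using True2 by (simp add: bform_def)
          then show ?thesis using True True2 m1 q2 eq by (simp add: e_def)
        next
          case False2: False
          have "x \<in> A" "y \<in> A" "x \<noteq> w" "y \<noteq> w" using x True unfolding A'_def by auto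
          then have "bform (x - y) (x - w) \<noteq> 0"
            using nra w False2 unfolding right_angle_def by metis
          then have "bform (x - y) (x - w) ^ (q - 1) = 1"
            unfolding q_def by (rule fermat_field)
          then show ?thesis using True False2 m1 eq by (simp add: e_def)
        qed
      qed
    qed
    then show ?thesis using I G by (simp add: V.span_diff)
  qed
  have finA': "finite A'" by simp
  have inj: "inj_on e A'"
    unfolding inj_on_def e_def fun_eq_iff by (metis zero_neq_one)
  have indep: "V.independent (e ` A')"
  proof -
    show ?thesis
    proof (rule V.independent_if_scalars_zero)
      show "finite (e ` A')" using finA' by simp
      fix c v
      assume h: "(\<Sum>v\<in>e ` A'. sc (c v) v) = 0" and v: "v \<in> e ` A'"
      then obtain x where x: "x \<in> A'" "v = e x" by auto
      have "(\<Sum>v\<in>e ` A'. sc (c v) v) x = 0" using h by simp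
      then have h2: "(\<Sum>v\<in>e ` A'. c v * v x) = 0" by (simp add: sum_fun_app sc_def)
      have "(\<Sum>v\<in>e ` A'. c v * v x) = c (e x) * e x x + (\<Sum>v\<in>e ` A' - {e x}. c v * v x)"
        using x finA' by (intro sum.remove) auto
      moreover have "(\<Sum>v\<in>e ` A' - {e x}. c v * v x) = 0"
      proof (rule sum.neutral, rule ballI)
        fix v' assume "v' \<in> e ` A' - {e x}"
        then obtain x' where "v' = e x'" "e x' \<noteq> e x" by auto
        then have "x' \<noteq> x" by auto
        then show "c v' * v' x = 0" using \<open>v' = e x'\<close> by (simp add: e_def)
      qed
      moreover have "e x x = 1" by (simp add: e_def)
      ultimately show "c v = 0" using h2 x by simp
    qed
  qed
  have "e ` A' \<subseteq> V.span B" using spanB by auto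
  then have c1: "card (e ` A') \<le> card B"
    using V.independent_span_bound[OF finB indep] by simp
  have c2: "card (e ` A') = card A - 1"
    using card_image[OF inj] w unfolding A'_def by simp
  have "card B \<le> card (multisets_of_size (UNIV :: 'n option set) (q - 1))"
    unfolding B_def by (rule card_image_le) (simp add: finite_multisets_of_size)
  also have "\<dots> = (n + q - 1) choose (q - 1)"
    using q2 by (simp add: card_multisets_of_size n_def)
  finally have "card A - 1 \<le> (n + q - 1) choose (q - 1)" using c1 c2 by simp
  then show False using assms(2) unfolding q_def n_def by linarith
qed

end
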